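(* Let $\lambda>0$, let $K$ be a $\lambda$-concave body in $\mathbb{R}^{n+1}$, and let $P$ be a $(k+1)$-dimensional linear subspace of $\mathbb{R}^{n+1}$ (with $0<k\leq n$). Then the orthogonal projection $K|P$ is a $\lambda$-concave body in $P$. Moreover, if $K$ is a $\lambda$-sausage body, then so is $K|P$.
   Context: A convex body is a compact convex set with non-empty interior; balls are closed. For $\lambda>0$, a convex body $K$ in a Euclidean space $E$ is $\lambda$-concave if for every $p\in\partial K$ there is a ball $B_{1/\lambda,p}\subset E$ of radius $1/\lambda$ whose boundary passes through $p$ such that $B_{1/\lambda,p}\cap U(p)\subseteq K\cap U(p)$ for some open neighborhood $U(p)$ of $p$ in $E$. A $\lambda$-sausage body is the convex hull of two (possibly coinciding) balls of radius $1/\lambda$. *)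

theory Defs
  imports "HOL-Analysis.Analysis"
begin

definition orth_proj :: "'a::euclidean_space set \<Rightarrow> 'a \<Rightarrow> 'a" where
  "orth_proj P x = (THE y. y \<in> P \<and> (\<forall>z\<in>P. (x - y) \<bullet> z = 0))"

definition convex_body_in :: "'a::euclidean_space set \<Rightarrow> 'a set \<Rightarrow> bool" where
  "convex_body_in S K \<longleftrightarrow> K \<subseteq> S \<and> compact K \<and> convex K \<and> (top_of_set S) interior_of K \<noteq> {}"

definition lambda_concave_in :: "'a::euclidean_space set \<Rightarrow> real \<Rightarrow> 'a set \<Rightarrow> bool" where
  "lambda_concave_in S l K \<longleftrightarrow> convex_body_in S K \<and>
     (\<forall>p \<in> (top_of_set S) frontier_of K.
        \<exists>c \<in> S. dist c p = 1 / l \<and>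
          (\<exists>U. openin (top_of_set S) U \<and> p \<in> U \<and> cball c (1 / l) \<inter> S \<inter> U \<subseteq> K \<inter> U))"

definition lambda_sausage_in :: "'a::euclidean_space set \<Rightarrow> real \<Rightarrow> 'a set \<Rightarrow> bool" where
  "lambda_sausage_in S l K \<longleftrightarrow>
     (\<exists>a \<in> S. \<exists>b \<in> S. K = convex hull ((cball a (1 / l) \<inter> S) \<union> (cball b (1 / l) \<inter> S)))"

end

theory Submission
  imports Defs
begin


lemma inner_eq0_aux:
  fixes x y y' :: "'a::real_inner"
  assumes "(x - y') \<bullet> (y - y') = 0" "(x - y) \<bullet> (y - y') = 0"
  shows "y' = y"
proof -
  have "(y - y') = (x - y') - (x - y)" by simp
  hence "(y - y') \<bullet> (y - y') = (x - y') \<bullet> (y - y') - (x - y) \<bullet> (y - y')"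
    by (metis inner_diff_left)
  hence "(y - y') \<bullet> (y - y') = 0" using assms by simp
  thus ?thesis by simp
qed

lemma op_ex:
  assumes "subspace P"
  shows "orth_proj P x \<in> P \<and> (\<forall>z\<in>P. (x - orth_proj P x) \<bullet> z = 0)"
proof -
  obtain y z where y: "y \<in> span P" and z: "\<And>w. w \<in> span P \<Longrightarrow> orthogonal z w" and xyz: "x = y + z"
    by (rule orthogonal_subspace_decomp_exists[of P x]) blast
  have sP: "span P = P" using assms by simp
  have yP: "y \<in> P" using y sP by simp
  have "\<forall>w\<in>P. (x - y) \<bullet> w = 0"
  proof
    fix w assume "w \<in> P"
    hence "orthogonal z w" using z span_base by blast
    moreover have "x - y = z" using xyz by simp
    ultimately show "(x - y) \<bullet> w = 0" by (simp add: orthogonal_def)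
  qed
  hence ex: "y \<in> P \<and> (\<forall>w\<in>P. (x - y) \<bullet> w = 0)" using yP by blast
  have un: "y' = y" if "y' \<in> P \<and> (\<forall>w\<in>P. (x - y') \<bullet> w = 0)" for y'
  proof -
    have "y - y' \<in> P" using that yP assms by (simp add: subspace_diff)
    hence "(x - y') \<bullet> (y - y') = 0" "(x - y) \<bullet> (y - y') = 0" using that ex by auto
    thus ?thesis by (rule inner_eq0_aux)
  qed
  have "orth_proj P x = y" unfolding orth_proj_def
    by (rule the_equality) (use ex un in blast)+
  thus ?thesis using ex by simp
qed
lemma op_unique:
  assumes "subspace P" "y \<in> P" "\<And>z. z \<in> P \<Longrightarrow> (x - y) \<bullet> z = 0"
  shows "orth_proj P x = y"
proof -
  have h: "orth_proj P x \<in> P" "\<And>z. z\<in>P \<Longrightarrow> (x - orth_proj P x) \<bullet> z = 0" using op_ex[OF assms(1)] by auto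
  have "y - orth_proj P x \<in> P" using h assms by (simp add: subspace_diff)
  hence "(x - y) \<bullet> (y - orth_proj P x) = 0" "(x - orth_proj P x) \<bullet> (y - orth_proj P x) = 0" using h assms by auto
  hence "(y - orth_proj P x) \<bullet> (y - orth_proj P x) = 0" by (simp add: algebra_simps inner_diff_left inner_diff_right)
  thus ?thesis by simp
qed

lemma op_linear:
  assumes "subspace P" shows "linear (orth_proj P)"
proof (rule linearI)
  fix x y
  have hx: "orth_proj P x \<in> P" "\<And>z. z\<in>P \<Longrightarrow> (x - orth_proj P x) \<bullet> z = 0" using op_ex[OF assms, of x] by auto
  have hy: "orth_proj P y \<in> P" "\<And>z. z\<in>P \<Longrightarrow> (y - orth_proj P y) \<bullet> z = 0" using op_ex[OF assms, of y] by auto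
  show "orth_proj P (x + y) = orth_proj P x + orth_proj P y"
  proof (rule op_unique[OF assms])
    show "orth_proj P x + orth_proj P y \<in> P" using hx hy assms by (simp add: subspace_add)
    fix z assume "z \<in> P"
    have "(x + y - (orth_proj P x + orth_proj P y)) = (x - orth_proj P x) + (y - orth_proj P y)" by (simp add: algebra_simps)
    thus "(x + y - (orth_proj P x + orth_proj P y)) \<bullet> z = 0" using hx(2)[OF \<open>z \<in> P\<close>] hy(2)[OF \<open>z \<in> P\<close>] by (simp only: inner_add_left)
  qed
next
  fix c x
  have hx: "orth_proj P x \<in> P" "\<And>z. z\<in>P \<Longrightarrow> (x - orth_proj P x) \<bullet> z = 0" using op_ex[OF assms, of x] by auto
  show "orth_proj P (c *\<^sub>R x) = c *\<^sub>R orth_proj P x"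
  proof (rule op_unique[OF assms])
    show "c *\<^sub>R orth_proj P x \<in> P" using hx assms by (simp add: subspace_scale)
    fix z assume "z \<in> P"
    have "c *\<^sub>R x - c *\<^sub>R orth_proj P x = c *\<^sub>R (x - orth_proj P x)" by (simp add: algebra_simps)
    thus "(c *\<^sub>R x - c *\<^sub>R orth_proj P x) \<bullet> z = 0" using hx(2)[OF \<open>z \<in> P\<close>] by simp
  qed
qed

lemma op_id: "subspace P \<Longrightarrow> y \<in> P \<Longrightarrow> orth_proj P y = y"
  by (rule op_unique) auto

lemma op_perp: assumes "subspace P" shows "orth_proj P (x - orth_proj P x) = 0"
proof (rule op_unique[OF assms])
  show "0 \<in> P" using \<open>subspace P\<close> by (rule subspace_0)
  fix z assume "z \<in> P"
  thus "(x - orth_proj P x - 0) \<bullet> z = 0" using op_ex[OF \<open>subspace P\<close>, of x] by simp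
qed

lemma op_shift:
  assumes "subspace P" "y \<in> P"
  shows "orth_proj P (y + (x - orth_proj P x)) = y"
  using linear_add[OF op_linear[OF assms(1)]] op_perp[OF assms(1)] op_id[OF assms] by simp

lemma op_norm:
  assumes "subspace P" shows "norm (orth_proj P x) \<le> norm x"
proof -
  have "orth_proj P x \<bullet> (x - orth_proj P x) = 0" using op_ex[OF assms, of x] by (simp add: inner_commute)
  hence "norm x ^ 2 = norm (orth_proj P x) ^ 2 + norm (x - orth_proj P x) ^ 2"
    by (metis add_diff_cancel_left' diff_add_cancel norm_add_Pythagorean orthogonal_def)
  hence "norm (orth_proj P x) ^ 2 \<le> norm x ^ 2" by simp
  thus ?thesis by (rule power2_le_imp_le) simp
qed

lemma op_dist:
  assumes "subspace P" shows "dist (orth_proj P x) (orth_proj P y) \<le> dist x y"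
  using op_norm[OF assms, of "x - y"] linear_diff[OF op_linear[OF assms]] by (simp add: dist_norm)

lemma op_cball:
  assumes "subspace P"
  shows "orth_proj P ` cball a r = cball (orth_proj P a) r \<inter> P"
proof
  show "orth_proj P ` cball a r \<subseteq> cball (orth_proj P a) r \<inter> P"
  proof
    fix y assume "y \<in> orth_proj P ` cball a r"
    then obtain x where "x \<in> cball a r" "y = orth_proj P x" by auto
    thus "y \<in> cball (orth_proj P a) r \<inter> P" using op_dist[OF assms, of a x] op_ex[OF assms, of x] by auto
  qed
next
  show "cball (orth_proj P a) r \<inter> P \<subseteq> orth_proj P ` cball a r"
  proof
    fix y assume y: "y \<in> cball (orth_proj P a) r \<inter> P"
    have "dist a (y + (a - orth_proj P a)) = dist (orth_proj P a) y" by (simp add: dist_norm algebra_simps)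
    thus "y \<in> orth_proj P ` cball a r" using y op_shift[OF assms, of y a]
      by (intro image_eqI[of _ _ "y + (a - orth_proj P a)"]) auto
  qed
qed



lemma expand3:
  fixes w e d :: "'a::real_inner"
  shows "(w + s *\<^sub>R e - d) \<bullet> (w + s *\<^sub>R e - d) = (w \<bullet> w) + s^2 * (e \<bullet> e) + (d \<bullet> d) + 2 * s * (e \<bullet> w) - 2 * (w \<bullet> d) - 2 * s * (e \<bullet> d)"
  by (simp add: inner_add_left inner_add_right inner_diff_left inner_diff_right inner_commute[of d w] inner_commute[of e w] inner_commute[of d e] power2_eq_square algebra_simps)

lemma op_ball_sub:
  assumes "subspace P" "ball a e \<subseteq> K"
  shows "ball (orth_proj P a) e \<inter> P \<subseteq> orth_proj P ` K"
proof
  fix y assume y: "y \<in> ball (orth_proj P a) e \<inter> P"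
  have "dist a (y + (a - orth_proj P a)) = dist (orth_proj P a) y" by (simp add: dist_norm algebra_simps)
  hence "y + (a - orth_proj P a) \<in> K" using y assms(2) by auto
  thus "y \<in> orth_proj P ` K" using y op_shift[OF assms(1), of y a]
    by (intro image_eqI[of _ _ "y + (a - orth_proj P a)"]) auto
qed

lemma claimA:
  assumes P: "subspace P" and dp: "\<delta> > 0" and r: "r > 0"
    and sub: "ball p \<delta> \<inter> cball c r \<subseteq> K" and dcp: "dist c p = r" and nP: "c - p \<notin> P"
  shows "\<exists>\<eta>>0. ball (orth_proj P p) \<eta> \<inter> P \<subseteq> orth_proj P ` K"
proof -
  define d where "d = c - p"
  define e where "e = d - orth_proj P d"
  define E where "E = e \<bullet> e"
  define q where "q = orth_proj P p"
  have qP: "q \<in> P" unfolding q_def using op_ex[OF P, of p] by blast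
  have pdP: "orth_proj P d \<in> P" using op_ex[OF P, of d] by blast
  have eperp: "\<And>w. w \<in> P \<Longrightarrow> e \<bullet> w = 0" using op_ex[OF P, of d] unfolding e_def by blast
  have "e \<noteq> 0"
  proof
    assume "e = 0"
    hence "d = orth_proj P d" by (simp add: e_def)
    hence "c - p \<in> P" using pdP d_def by simp
    with nP show False ..
  qed
  hence Epos: "E > 0" unfolding E_def by simp
  have ed: "e \<bullet> d = E"
  proof -
    have "d = orth_proj P d + e" unfolding e_def by simp
    hence "e \<bullet> d = e \<bullet> orth_proj P d + e \<bullet> e" by (metis inner_add_right)
    thus ?thesis using eperp[OF pdP] E_def by simp
  qed
  have nd: "norm d = r" using dcp d_def by (simp add: dist_norm)
  have pe: "orth_proj P e = 0" unfolding e_def by (rule op_perp[OF P])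
  have ne: "norm e \<ge> 0" by simp
  define \<eta> where "\<eta> = min 1 (min (E/(2*r+1)) (\<delta>/(1+(2*r+1)*norm e/E)))"
  have den: "1+(2*r+1)*norm e/E > 0" using Epos r ne by (simp add: add_pos_nonneg)
  have etapos: "\<eta> > 0" unfolding \<eta>_def using Epos r dp den by simp
  have "ball q \<eta> \<inter> P \<subseteq> orth_proj P ` K"
  proof
    fix y assume y: "y \<in> ball q \<eta> \<inter> P"
    define w where "w = y - q"
    define a where "a = norm w"
    have wP: "w \<in> P" using y qP P w_def by (simp add: subspace_diff)
    have a1: "a < \<eta>" using y a_def w_def by (simp add: dist_norm norm_minus_commute)
    have a0: "a \<ge> 0" using a_def by simp
    define s where "s = (2*r*a + a^2)/E"
    have sE: "s * E = 2*r*a + a^2" using Epos s_def by simp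
    have s0: "s \<ge> 0" using s_def Epos r a0 by simp
    have "a \<le> 1" "a \<le> E/(2*r+1)" using a1 unfolding \<eta>_def by auto
    hence "(2*r+1) * a \<le> E" using r by (simp add: field_simps)
    moreover have "a^2 \<le> a" using \<open>a \<le> 1\<close> a0 by (simp add: power2_eq_square mult_left_le)
    ultimately have "2*r*a + a^2 \<le> E" by (simp add: algebra_simps)
    hence s1: "s \<le> 1" using Epos unfolding s_def by (simp add: divide_le_eq)
    define x where "x = p + w + s *\<^sub>R e"
    have px: "orth_proj P x = y"
    proof -
      have lin: "linear (orth_proj P)" by (rule op_linear[OF P])
      have "orth_proj P x = orth_proj P p + orth_proj P w + s *\<^sub>R orth_proj P e"
        unfolding x_def using linear_add[OF lin] linear_scale[OF lin] by simp
      thus ?thesis using pe op_id[OF P wP] q_def w_def by simp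
    qed
    have "norm (x - p) \<le> a + s * norm e"
    proof -
      have "norm (x - p) = norm (w + s *\<^sub>R e)" unfolding x_def by (simp add: algebra_simps)
      also have "\<dots> \<le> norm w + norm (s *\<^sub>R e)" by (rule norm_triangle_ineq)
      finally show ?thesis using a_def s0 by simp
    qed
    also have "a + s * norm e \<le> a * (1 + (2*r+1)*norm e/E)"
    proof -
      have "s \<le> (2*r+1)*a/E" unfolding s_def using Epos \<open>a^2 \<le> a\<close>
        by (simp add: divide_right_mono algebra_simps)
      hence "s * norm e \<le> (2*r+1)*a/E * norm e" using ne by (rule mult_right_mono)
      thus ?thesis by (simp add: algebra_simps)
    qed
    also have "\<dots> < \<delta>"
    proof -
      have "a < \<delta>/(1+(2*r+1)*norm e/E)" using a1 unfolding \<eta>_def by auto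
      thus ?thesis using den by (simp add: pos_less_divide_eq)
    qed
    finally have xb: "x \<in> ball p \<delta>" by (simp add: dist_norm norm_minus_commute)
    have "(x - c) \<bullet> (x - c) = (w \<bullet> w) + s^2 * E + (d \<bullet> d) + 2 * s * (e \<bullet> w) - 2 * (w \<bullet> d) - 2 * s * (e \<bullet> d)"
    proof -
      have "x - c = w + s *\<^sub>R e - d" unfolding x_def d_def by (simp add: algebra_simps)
      moreover have "(w + s *\<^sub>R e - d) \<bullet> (w + s *\<^sub>R e - d) = (w \<bullet> w) + s^2 * E + (d \<bullet> d) + 2 * s * (e \<bullet> w) - 2 * (w \<bullet> d) - 2 * s * (e \<bullet> d)"
        unfolding E_def by (rule expand3)
      ultimately show ?thesis by simp
    qed
    also have "\<dots> = a^2 + s^2 * E + r^2 - 2 * (w \<bullet> d) - 2 * s * E"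
      using eperp[OF wP] ed nd a_def by (simp add: power2_norm_eq_inner[symmetric] dot_square_norm)
    also have "\<dots> \<le> r^2"
    proof -
      have cs: "w \<bullet> d \<ge> - (a * r)" using Cauchy_Schwarz_ineq2[of w d] a_def nd by (simp add: abs_le_iff)
      have "s^2 * E \<le> s * E" using s0 s1 Epos by (simp add: power2_eq_square mult_left_le_one_le mult_right_mono)
      thus ?thesis using cs sE by (simp add: algebra_simps)
    qed
    finally have "norm (x - c) ^2 \<le> r^2" by (simp add: power2_norm_eq_inner)
    hence "norm (x - c) \<le> r" using r by (metis power2_le_imp_le less_imp_le)
    hence "x \<in> cball c r" by (simp add: dist_norm norm_minus_commute)
    hence "x \<in> K" using xb sub by blast
    thus "y \<in> orth_proj P ` K" using px by blast
  qed
  thus ?thesis using etapos unfolding q_def by blast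
qed


theorem lemma2p4:
  fixes K P :: "'a::euclidean_space set" and l :: real
  assumes "l > 0"
    and "lambda_concave_in UNIV l K"
    and "subspace P" and "dim P \<ge> 2"
  shows "lambda_concave_in P l (orth_proj P ` K)
         \<and> (lambda_sausage_in UNIV l K \<longrightarrow> lambda_sausage_in P l (orth_proj P ` K))"
proof -
  note Psub = assms(3)
  define r where "r = 1 / l"
  have r: "r > 0" using assms(1) r_def by simp
  define K' where "K' = orth_proj P ` K"
  have lin: "linear (orth_proj P)" by (rule op_linear[OF Psub])
  have cK: "compact K" and cvK: "convex K" and intK: "interior K \<noteq> {}"
    and fr: "\<And>p. p \<in> frontier K \<Longrightarrow> \<exists>c. dist c p = r \<and> (\<exists>U. open U \<and> p \<in> U \<and> cball c r \<inter> U \<subseteq> K \<inter> U)"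
    using assms(2) unfolding lambda_concave_in_def convex_body_in_def r_def
    by (auto simp: open_openin[symmetric])
  have K'P: "K' \<subseteq> P" unfolding K'_def using op_ex[OF Psub] by blast
  have cK': "compact K'" unfolding K'_def
    by (rule compact_continuous_image[OF linear_continuous_on cK])
       (use lin linear_conv_bounded_linear in blast)
  have cvK': "convex K'" unfolding K'_def by (rule convex_linear_image[OF lin cvK])
  have intsub: "orth_proj P a \<in> top_of_set P interior_of K'" if "ball a e \<subseteq> K" "e > 0" for a e
  proof -
    have "ball (orth_proj P a) e \<inter> P \<subseteq> K'" unfolding K'_def by (rule op_ball_sub[OF Psub that(1)])
    moreover have "openin (top_of_set P) (ball (orth_proj P a) e \<inter> P)"
      by (subst Int_commute) (rule openin_open_Int, simp)
    moreover have "orth_proj P a \<in> ball (orth_proj P a) e \<inter> P" using that(2) op_ex[OF Psub, of a] by simp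
    ultimately show ?thesis by (meson interior_of_maximal subsetD)
  qed
  have body: "convex_body_in P K'"
  proof -
    obtain a where "a \<in> interior K" using intK by blast
    then obtain e where "e > 0" "ball a e \<subseteq> K" using open_contains_ball interior_subset
      by (metis open_interior subset_trans)
    thus ?thesis unfolding convex_body_in_def using K'P cK' cvK' intsub by blast
  qed
  have frontP: "\<exists>c \<in> P. dist c q = r \<and>
          (\<exists>U. openin (top_of_set P) U \<and> q \<in> U \<and> cball c r \<inter> P \<inter> U \<subseteq> K' \<inter> U)"
    if q: "q \<in> top_of_set P frontier_of K'" for q
  proof -
    have "closedin (top_of_set P) K'" using K'P cK' by (simp add: closed_subset compact_imp_closed)
    hence "top_of_set P closure_of K' = K'" by (rule closure_of_closedin)
    hence qK': "q \<in> K'" and qni: "q \<notin> top_of_set P interior_of K'" using q by (auto simp: frontier_of_def)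
    obtain p where pK: "p \<in> K" and qp: "q = orth_proj P p" using qK' unfolding K'_def by blast
    have pfr: "p \<in> frontier K"
    proof (rule ccontr)
      assume "p \<notin> frontier K"
      moreover have "closure K = K" using cK by (simp add: compact_imp_closed)
      ultimately have pi: "p \<in> interior K" using pK unfolding frontier_def by blast
      obtain e where e: "e > 0" "ball p e \<subseteq> interior K"
        using open_contains_ball[of "interior K"] open_interior[of K] pi by blast
      hence "ball p e \<subseteq> K" using interior_subset by blast
      from intsub[OF this e(1)] have "orth_proj P p \<in> top_of_set P interior_of K'" .
      thus False using qni qp by simp
    qed
    obtain c U where dcp: "dist c p = r" and U: "open U" "p \<in> U" and cU: "cball c r \<inter> U \<subseteq> K \<inter> U"
      using fr[OF pfr] by blast
    obtain \<delta> where dp: "\<delta> > 0" and bU: "ball p \<delta> \<subseteq> U" using U open_contains_ball by blast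
    have sub: "ball p \<delta> \<inter> cball c r \<subseteq> K" using bU cU by blast
    have dP: "c - p \<in> P"
    proof (rule ccontr)
      assume "c - p \<notin> P"
      then obtain \<eta> where "\<eta> > 0" "ball (orth_proj P p) \<eta> \<inter> P \<subseteq> K'"
        using claimA[OF Psub dp r sub dcp] unfolding K'_def by blast
      moreover have "openin (top_of_set P) (ball (orth_proj P p) \<eta> \<inter> P)"
        by (subst Int_commute) (rule openin_open_Int, simp)
      moreover have "q \<in> ball (orth_proj P p) \<eta> \<inter> P" using \<open>\<eta> > 0\<close> qK' K'P qp by auto
      ultimately have "q \<in> top_of_set P interior_of K'" by (meson interior_of_maximal subsetD)
      thus False using qni by blast
    qed
    have qP: "q \<in> P" using qK' K'P by blast
    define c' where "c' = q + (c - p)"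
    have c'P: "c' \<in> P" unfolding c'_def using qP dP Psub by (simp add: subspace_add)
    have "dist c' q = r" unfolding c'_def using dcp by (simp add: dist_norm)
    moreover have "cball c' r \<inter> P \<inter> (ball q \<delta> \<inter> P) \<subseteq> K' \<inter> (ball q \<delta> \<inter> P)"
    proof
      fix y assume y: "y \<in> cball c' r \<inter> P \<inter> (ball q \<delta> \<inter> P)"
      define x where "x = y + (p - orth_proj P p)"
      have px: "orth_proj P x = y" unfolding x_def using op_shift[OF Psub, of y p] y by blast
      have "dist x p = dist y q" unfolding x_def qp by (simp add: dist_norm algebra_simps)
      hence "x \<in> ball p \<delta>" using y by (simp add: dist_commute)
      moreover have "dist c x = dist c' y" unfolding x_def c'_def qp by (simp add: dist_norm algebra_simps)
      hence "x \<in> cball c r" using y by simp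
      ultimately have "x \<in> K" using sub by blast
      thus "y \<in> K' \<inter> (ball q \<delta> \<inter> P)" using y px unfolding K'_def by blast
    qed
    moreover have "openin (top_of_set P) (ball q \<delta> \<inter> P)" by (subst Int_commute) (rule openin_open_Int, simp)
    moreover have "q \<in> ball q \<delta> \<inter> P" using dp qP by simp
    ultimately show ?thesis using c'P by blast
  qed
  have part1: "lambda_concave_in P l K'"
    unfolding lambda_concave_in_def using body frontP r_def by blast
  have part2: "lambda_sausage_in P l K'" if "lambda_sausage_in UNIV l K"
  proof -
    have "\<exists>a b. K = convex hull (cball a r \<union> cball b r)"
      using that unfolding lambda_sausage_in_def r_def by simp
    then obtain a b where Kab: "K = convex hull (cball a r \<union> cball b r)" by blast
    have "K' = convex hull (orth_proj P ` (cball a r \<union> cball b r))"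
      unfolding K'_def Kab by (rule convex_hull_linear_image[OF lin])
    also have "\<dots> = convex hull ((cball (orth_proj P a) r \<inter> P) \<union> (cball (orth_proj P b) r \<inter> P))"
      by (simp add: image_Un op_cball[OF Psub])
    finally show ?thesis unfolding lambda_sausage_in_def r_def using op_ex[OF Psub] by blast
  qed
  show ?thesis using part1 part2 K'_def by blast
qed

end
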